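(* Let $G=(V,E)$ be a graph with adjacency matrix $A$, let $k$ be a positive integer and $C=\{1,\dots,k\}$. Then $G$ is $k$-colorable if and only if there exists $x\in\{0,1\}^{V\times C}$ such that $\sum_{j\in C}x_{ij}=1$ for all $i\in V$, and $\sum_{i\in V}A_{pi}x_{ij}\le |E|(1-x_{pj})$ for all $p\in V$ and $j\in C$. *)

theory Defs
  imports Main
begin

definition simple_graph :: "'a set \<Rightarrow> ('a \<Rightarrow> 'a \<Rightarrow> bool) \<Rightarrow> bool" where
  "simple_graph V E \<longleftrightarrow> finite V \<and> (\<forall>u v. E u v \<longrightarrow> u \<in> V \<and> v \<in> V)
     \<and> (\<forall>u v. E u v \<longrightarrow> E v u) \<and> (\<forall>v. \<not> E v v)"

definition adj :: "('a \<Rightarrow> 'a \<Rightarrow> bool) \<Rightarrow> 'a \<Rightarrow> 'a \<Rightarrow> nat" where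
  "adj E p i = (if E p i then 1 else 0)"

definition edges :: "('a \<Rightarrow> 'a \<Rightarrow> bool) \<Rightarrow> 'a set set" where
  "edges E = {{u, v} | u v. E u v}"

definition num_edges :: "('a \<Rightarrow> 'a \<Rightarrow> bool) \<Rightarrow> nat" where
  "num_edges E = card (edges E)"

definition colorable :: "'a set \<Rightarrow> ('a \<Rightarrow> 'a \<Rightarrow> bool) \<Rightarrow> nat \<Rightarrow> bool" where
  "colorable V E k \<longleftrightarrow> (\<exists>c. (\<forall>v\<in>V. c v \<in> {1..k}) \<and> (\<forall>u\<in>V. \<forall>v\<in>V. E u v \<longrightarrow> c u \<noteq> c v))"

end

theory Submission
  imports Defs
begin

lemma deg_le:
  assumes "simple_graph V E"
  shows "card {i\<in>V. E p i} \<le> num_edges E"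
proof -
  have fV: "finite V" using assms by (simp add: simple_graph_def)
  have "edges E \<subseteq> Pow V" using assms by (auto simp: edges_def simple_graph_def)
  hence fE: "finite (edges E)" using fV by (meson finite_Pow_iff finite_subset)
  have inj: "inj_on (\<lambda>i. {p, i}) {i\<in>V. E p i}"
  proof (rule inj_onI)
    fix a b assume "a \<in> {i\<in>V. E p i}" "b \<in> {i\<in>V. E p i}" "{p, a} = {p, b}"
    moreover have "a \<noteq> p" "b \<noteq> p" using calculation assms by (auto simp: simple_graph_def)
    ultimately show "a = b" by (metis doubleton_eq_iff)
  qed
  have "(\<lambda>i. {p, i}) ` {i\<in>V. E p i} \<subseteq> edges E" by (auto simp: edges_def)
  from card_inj_on_le[OF inj this fE] show ?thesis by (simp add: num_edges_def)
qed

theorem lemma12: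
  fixes V :: "'a set" and E :: "'a \<Rightarrow> 'a \<Rightarrow> bool" and k :: nat
  assumes "simple_graph V E" and "k \<ge> 1"
  shows "colorable V E k \<longleftrightarrow>
    (\<exists>x :: 'a \<Rightarrow> nat \<Rightarrow> int.
       (\<forall>i\<in>V. \<forall>j\<in>{1..k}. x i j \<in> {0, 1}) \<and>
       (\<forall>i\<in>V. (\<Sum>j\<in>{1..k}. x i j) = 1) \<and>
       (\<forall>p\<in>V. \<forall>j\<in>{1..k}.
          (\<Sum>i\<in>V. int (adj E p i) * x i j) \<le> int (num_edges E) * (1 - x p j)))"
proof
  have fV: "finite V" using assms by (simp add: simple_graph_def)
  assume "colorable V E k"
  then obtain c where c1: "\<forall>v\<in>V. c v \<in> {1..k}" and c2: "\<forall>u\<in>V. \<forall>v\<in>V. E u v \<longrightarrow> c u \<noteq> c v"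
    by (auto simp: colorable_def)
  define x :: "'a \<Rightarrow> nat \<Rightarrow> int" where "x i j = (if c i = j then 1 else 0)" for i j
  have s: "\<forall>i\<in>V. (\<Sum>j\<in>{1..k}. x i j) = 1"
    using c1 by (simp add: x_def sum.delta)
  have eq: "(\<Sum>i\<in>V. int (adj E p i) * x i j) = (\<Sum>i\<in>{i\<in>V. E p i}. x i j)" for p j
    using fV by (simp add: sum.inter_filter adj_def; intro sum.cong; simp)
  have "(\<Sum>i\<in>V. int (adj E p i) * x i j) \<le> int (num_edges E) * (1 - x p j)"
    if p: "p \<in> V" and j: "j \<in> {1..k}" for p j
  proof (cases "c p = j")
    case True
    have "(\<Sum>i\<in>{i\<in>V. E p i}. x i j) = 0"
      using c2 p True by (intro sum.neutral) (fastforce simp: x_def)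
    thus ?thesis using eq True by (simp add: x_def)
  next
    case False
    have "(\<Sum>i\<in>{i\<in>V. E p i}. x i j) \<le> (\<Sum>i\<in>{i\<in>V. E p i}. 1)"
      by (intro sum_mono) (simp add: x_def)
    also have "\<dots> = int (card {i\<in>V. E p i})" by simp
    also have "\<dots> \<le> int (num_edges E)" using deg_le[OF assms(1)] by simp
    finally show ?thesis using eq False by (simp add: x_def)
  qed
  thus "\<exists>x :: 'a \<Rightarrow> nat \<Rightarrow> int.
       (\<forall>i\<in>V. \<forall>j\<in>{1..k}. x i j \<in> {0, 1}) \<and>
       (\<forall>i\<in>V. (\<Sum>j\<in>{1..k}. x i j) = 1) \<and>
       (\<forall>p\<in>V. \<forall>j\<in>{1..k}.
          (\<Sum>i\<in>V. int (adj E p i) * x i j) \<le> int (num_edges E) * (1 - x p j))"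
    using s by (intro exI[of _ x]) (auto simp: x_def)
next
  have fV: "finite V" using assms by (simp add: simple_graph_def)
  assume "\<exists>x :: 'a \<Rightarrow> nat \<Rightarrow> int.
       (\<forall>i\<in>V. \<forall>j\<in>{1..k}. x i j \<in> {0, 1}) \<and>
       (\<forall>i\<in>V. (\<Sum>j\<in>{1..k}. x i j) = 1) \<and>
       (\<forall>p\<in>V. \<forall>j\<in>{1..k}.
          (\<Sum>i\<in>V. int (adj E p i) * x i j) \<le> int (num_edges E) * (1 - x p j))"
  then obtain x :: "'a \<Rightarrow> nat \<Rightarrow> int" where
    x1: "\<forall>i\<in>V. \<forall>j\<in>{1..k}. x i j \<in> {0, 1}" and
    x2: "\<forall>i\<in>V. (\<Sum>j\<in>{1..k}. x i j) = 1" and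
    x3: "\<forall>p\<in>V. \<forall>j\<in>{1..k}.
          (\<Sum>i\<in>V. int (adj E p i) * x i j) \<le> int (num_edges E) * (1 - x p j)"
    by blast
  have ex: "\<exists>j. j \<in> {1..k} \<and> x i j = 1" if "i \<in> V" for i
  proof (rule ccontr)
    assume "\<not> ?thesis"
    hence "\<forall>j\<in>{1..k}. x i j = 0" using x1 that by auto
    hence "(\<Sum>j\<in>{1..k}. x i j) = 0" by simp
    thus False using x2 that by simp
  qed
  define c where "c i = (SOME j. j \<in> {1..k} \<and> x i j = 1)" for i
  have cc: "c i \<in> {1..k} \<and> x i (c i) = 1" if "i \<in> V" for i
    unfolding c_def using someI_ex[OF ex[OF that]] .
  have "c u \<noteq> c v" if u: "u \<in> V" and v: "v \<in> V" and e: "E u v" for u v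
  proof
    assume eqc: "c u = c v"
    let ?j = "c u"
    have j: "?j \<in> {1..k}" and xu: "x u ?j = 1" using cc[OF u] by auto
    have xv: "x v ?j = 1" using cc[OF v] eqc by simp
    have nn: "\<forall>i\<in>V. 0 \<le> int (adj E u i) * x i ?j" using x1 j by (fastforce simp: adj_def)
    have "int (adj E u v) * x v ?j \<le> (\<Sum>i\<in>V. int (adj E u i) * x i ?j)"
      using member_le_sum[of v V "\<lambda>i. int (adj E u i) * x i ?j"] nn v fV by blast
    also have "\<dots> \<le> 0" using x3 u j xu by fastforce
    finally show False using e xv by (simp add: adj_def)
  qed
  thus "colorable V E k" unfolding colorable_def using cc by blast
qed

end
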